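(* Fix any total budget $\mathrm{TB}\in\mathbb N_0$. For every $k\in\mathbb N$, $-1/2^k<*<1/2^k$, where $*=\{0\mid 0\}$.
   Context: Game forms are defined recursively: $G=\{G^{\mathcal L}\mid G^{\mathcal R}\}$ with finite sets of Left and Right options, and finite birthday. $0=\{\varnothing\mid\varnothing\}$, $1=\{0\mid\varnothing\}$, $*=\{0\mid 0\}$. Dyadic game forms: $1/2^0=1$ and for $k\in\mathbb N$, $1/2^k=\{0\mid 1/2^{k-1}\}$; $-1/2^k=\overline{1/2^k}$, where the conjugate is $\bar G=\{\overline{G^{\mathcal R}}\mid\overline{G^{\mathcal L}}\}$. The budget set for total budget $\mathrm{TB}$ is $\mathcal B=\{0,\dots,\mathrm{TB},\hat 0,\dots,\widehat{\mathrm{TB}}\}$: state $p$ (resp. $\hat p$) means Left holds $p$ dollars and Right holds $\mathrm{TB}-p$, and Right (resp. Left) holds the tie-breaking marker. Play of $(G,\tilde p)$: at every position (terminal ones included) both players bid simultaneously, Left $\ell\in\{0,\dots,p\}$, Right $r\in\{0,\dots,\mathrm{TB}-p\}$. If Left holds the marker (state $\hat p$): if $\ell>r$ Left moves to $(G^L,\widehat{p-\ell})$, or, including the marker (allowed when $\ell\ge r$), to $(G^L,p-\ell)$; if $\ell=r$ Left wins, the marker passes to Right, play continues at $(G^L,p-\ell)$; if $\ell<r$ Right moves to $(G^R,\widehat{p+r})$. Symmetrically when Right holds the marker (state $p$): if $r>\ell$ Right moves to $(G^R,p+r)$ or, including the marker, to $(G^R,\widehat{p+r})$; if $r=\ell$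 Right wins, the marker passes to Left, play continues at $(G^R,\widehat{p+r})$; if $r<\ell$ Left moves to $(G^L,p-\ell)$. A player who wins a bid but has no option loses. $o(G,\tilde p)\in\{\mathrm L,\mathrm R\}$ is the winner under optimal play; $\mathrm L>\mathrm R$. Disjunctive sum $G+H=\{G^{\mathcal L}+H,G+H^{\mathcal L}\mid G^{\mathcal R}+H,G+H^{\mathcal R}\}$. $G\ge H$ means $o(G+X,\tilde p)\ge o(H+X,\tilde p)$ for all game forms $X$ and all $\tilde p\in\mathcal B$; $G>H$ means $G\ge H$ and not $H\ge G$; $G<H$ means $H>G$. *)

theory Defs
  imports "HOL-Library.FSet"
begin

text \<open>A game form is a pair of finite sets of Left and Right options.
  Finite birthday is automatic for an (inductive) datatype.\<close>

datatype game = Game (lopts: "game fset") (ropts: "game fset")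

definition zero_g :: game where "zero_g = Game {||} {||}"
definition one_g :: game where "one_g = Game {|zero_g|} {||}"
definition star_g :: game where "star_g = Game {|zero_g|} {|zero_g|}"

primrec conj_g :: "game \<Rightarrow> game" where
  "conj_g (Game L R) = Game (fimage conj_g R) (fimage conj_g L)"

text \<open>Dyadic game forms: dyad k = 1/2^k.\<close>
fun dyad :: "nat \<Rightarrow> game" where
  "dyad 0 = one_g"
| "dyad (Suc k) = Game {|zero_g|} {|dyad k|}"

lemma size_lopts[termination_simp]: "x |\<in>| L \<Longrightarrow> size x < size (Game L R)"
  by (induct L) (auto simp: size_fset_simps fset_of_list_elem)

lemma size_ropts[termination_simp]: "x |\<in>| R \<Longrightarrow> size x < size (Game L R)"
  by (induct R) (auto simp: size_fset_simps)

function (sequential) plus_g :: "game \<Rightarrow> game \<Rightarrow> game" where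
  "plus_g (Game GL GR) (Game HL HR) =
     Game ((\<lambda>g. plus_g g (Game HL HR)) |`| GL |\<union>| (\<lambda>h. plus_g (Game GL GR) h) |`| HL)
          ((\<lambda>g. plus_g g (Game HL HR)) |`| GR |\<union>| (\<lambda>h. plus_g (Game GL GR) h) |`| HR)"
  by pat_completeness auto
termination
  by (relation "measure (\<lambda>(g, h). size g + size h)") (auto dest: size_lopts size_ropts)

text \<open>winL TB G p m: in the position (G, budget state), where Left holds p dollars,
  Right holds TB - p dollars, and m = True means Left holds the marker (state \<open>p\<close> with hat),
  m = False means Right holds the marker (state p), Left wins under optimal play, i.e. Left has
  a bid such that, whatever Right bids, Left wins the remaining play.\<close>
primrec winL :: "nat \<Rightarrow> game \<Rightarrow> nat \<Rightarrow> bool \<Rightarrow> bool" where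
  "winL TB (Game L R) = (\<lambda>p m.
     let WL = fimage (winL TB) L; WR = fimage (winL TB) R in
     (\<exists>l\<le>p. \<forall>r\<le>TB - p.
        (if m then
           (l > r \<longrightarrow> (\<exists>w\<in>fset WL. w (p - l) True \<or> w (p - l) False)) \<and>
           (l = r \<longrightarrow> (\<exists>w\<in>fset WL. w (p - l) False)) \<and>
           (l < r \<longrightarrow> (\<forall>w\<in>fset WR. w (p + r) True))
         else
           (r > l \<longrightarrow> (\<forall>w\<in>fset WR. w (p + r) False \<and> w (p + r) True)) \<and>
           (r = l \<longrightarrow> (\<forall>w\<in>fset WR. w (p + r) True)) \<and>
           (r < l \<longrightarrow> (\<exists>w\<in>fset WL. w (p - l) False)))))"

text \<open>Outcome: True = L, False = R (with L > R).\<close>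
definition outcome :: "nat \<Rightarrow> game \<Rightarrow> nat \<Rightarrow> bool \<Rightarrow> bool" where
  "outcome TB G p m = winL TB G p m"

definition geq_g :: "nat \<Rightarrow> game \<Rightarrow> game \<Rightarrow> bool" where
  "geq_g TB G H = (\<forall>X p m. p \<le> TB \<longrightarrow> outcome TB (plus_g H X) p m \<longrightarrow> outcome TB (plus_g G X) p m)"

definition gt_g :: "nat \<Rightarrow> game \<Rightarrow> game \<Rightarrow> bool" where
  "gt_g TB G H = (geq_g TB G H \<and> \<not> geq_g TB H G)"

end

theory Submission
  imports Defs
begin

definition bid_ok :: "(nat \<Rightarrow> bool \<Rightarrow> bool) \<Rightarrow> (nat \<Rightarrow> bool \<Rightarrow> bool) \<Rightarrow> nat \<Rightarrow> bool \<Rightarrow> nat \<Rightarrow> nat \<Rightarrow> bool" where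
"bid_ok A B p m l r = (if m then (l > r \<longrightarrow> A (p-l) True \<or> A (p-l) False) \<and> (l = r \<longrightarrow> A (p-l) False) \<and> (l < r \<longrightarrow> B (p+r) True)
   else (r > l \<longrightarrow> B (p+r) False \<and> B (p+r) True) \<and> (r = l \<longrightarrow> B (p+r) True) \<and> (r < l \<longrightarrow> A (p-l) False))"

definition LW :: "nat \<Rightarrow> game \<Rightarrow> nat \<Rightarrow> bool \<Rightarrow> bool" where
"LW TB G q mm = (\<exists>x. x |\<in>| lopts G \<and> winL TB x q mm)"
definition RW :: "nat \<Rightarrow> game \<Rightarrow> nat \<Rightarrow> bool \<Rightarrow> bool" where
"RW TB G q mm = (\<forall>x. x |\<in>| ropts G \<longrightarrow> winL TB x q mm)"

lemma winL_eq: "winL TB G p m = (\<exists>l\<le>p. \<forall>r\<le>TB-p. bid_ok (LW TB G) (RW TB G) p m l r)"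
  apply (cases G) apply (simp add: Let_def bid_ok_def LW_def RW_def)
  apply (intro ex_cong1 conj_cong refl all_cong1 imp_cong) apply auto
  done

lemma lopts_plus: "lopts (plus_g G H) = (\<lambda>g. plus_g g H) |`| lopts G |\<union>| (\<lambda>h. plus_g G h) |`| lopts H"
  by (cases G; cases H) simp
lemma ropts_plus: "ropts (plus_g G H) = (\<lambda>g. plus_g g H) |`| ropts G |\<union>| (\<lambda>h. plus_g G h) |`| ropts H"
  by (cases G; cases H) simp

lemma plus_zero_left: "plus_g zero_g X = X"
proof (induction X)
  case (Game L R)
  then show ?case by (simp add: zero_g_def fset.map_ident_strong)
qed
lemma plus_zero_right: "plus_g X zero_g = X"
proof (induction X)
  case (Game L R)
  then show ?case by (simp add: zero_g_def fset.map_ident_strong)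
qed

lemma conj_zero: "conj_g zero_g = zero_g" by (simp add: zero_g_def)
lemma conj_dyad0: "conj_g (dyad 0) = Game {||} {|zero_g|}"
  by (simp add: one_g_def zero_g_def)
lemma conj_dyadS: "conj_g (dyad (Suc i)) = Game {|conj_g (dyad i)|} {|zero_g|}"
  by (simp add: zero_g_def)

definition le_st :: "nat \<Rightarrow> bool \<Rightarrow> nat \<Rightarrow> bool \<Rightarrow> bool" where
"le_st a ma b mb = (a < b \<or> (a = b \<and> (ma = mb \<or> \<not> ma)))"

lemma C_step:
  assumes le: "le_st p m q m'" and q: "q \<le> TB" and lp: "l \<le> p"
  and hw: "\<forall>r\<le>TB-p. bid_ok A B p m l r"
  and hA: "\<And>a ma b mb. b \<le> TB \<Longrightarrow> le_st a ma b mb \<Longrightarrow> A a ma \<Longrightarrow> A' b mb"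
  and hB: "\<And>a ma b mb. b \<le> TB \<Longrightarrow> le_st a ma b mb \<Longrightarrow> B a ma \<Longrightarrow> B' b mb"
  and hE: "\<And>b mb. b \<le> TB \<Longrightarrow> le_st p m b mb \<Longrightarrow> E b mb"
  and hX: "\<not> m \<Longrightarrow> A' q False"
  shows "\<forall>r\<le>TB-q. bid_ok A' (\<lambda>s mm. B' s mm \<and> E s mm) q m' l r"
proof (intro allI impI)
  fix r assume r: "r \<le> TB - q"
  have pq: "p \<le> q" using le by (auto simp: le_st_def)
  have w: "bid_ok A B p m l r" using hw r pq by auto
  have A1: "\<And>mm. A (p-l) mm \<Longrightarrow> A' (q-l) mm"
    by (rule hA[of "q-l" "p-l"]) (use q lp pq in \<open>auto simp: le_st_def\<close>)
  have B1: "\<And>mm. B (p+r) mm \<Longrightarrow> B' (q+r) mm"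
    by (rule hB[of "q+r" "p+r"]) (use q r pq in \<open>auto simp: le_st_def\<close>)
  have E1: "\<And>mm. 0 < r \<Longrightarrow> E (q+r) mm"
    by (rule hE) (use q r pq in \<open>auto simp: le_st_def\<close>)
  have E2: "E (q+r) True"
    by (rule hE) (use q r pq in \<open>auto simp: le_st_def\<close>)
  consider (TT) "m" "m'" | (FF) "\<not>m" "\<not>m'" | (FT) "\<not>m" "m'" | (TF) "m" "\<not>m'" by blast
  then show "bid_ok A' (\<lambda>s mm. B' s mm \<and> E s mm) q m' l r"
  proof cases
    case TT
    then show ?thesis using w A1 B1 E1 E2 by (auto simp: bid_ok_def)
  next
    case FF
    then show ?thesis using w A1 B1 E1 E2 by (auto simp: bid_ok_def)
  next
    case FT
    have tie: "A' (q-l) False" if "l = r"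
    proof (cases "l = 0")
      case True then show ?thesis using hX FT by simp
    next
      case False
      have "bid_ok A B p m l (r-1)" using hw r pq by auto
      then have "A (p-l) False" using FT False that by (auto simp: bid_ok_def)
      then show ?thesis using A1 by blast
    qed
    show ?thesis using FT w A1 B1 E1 E2 tie by (auto simp: bid_ok_def)
  next
    case TF
    have pq': "p < q" using le TF by (auto simp: le_st_def)
    have A2: "\<And>mm mm'. A (p-l) mm \<Longrightarrow> A' (q-l) mm'"
      by (rule hA[of "q-l" "p-l"]) (use q lp pq' in \<open>auto simp: le_st_def\<close>)
    have B2: "\<And>mm mm'. B (p+r) mm \<Longrightarrow> B' (q+r) mm'"
      by (rule hB[of "q+r" "p+r"]) (use q r pq' in \<open>auto simp: le_st_def\<close>)
    have tie: "B' (q+r) True" if "l = r"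
    proof -
      have "bid_ok A B p m l (r+1)" using hw r pq' q by auto
      then have "B (p+(r+1)) True" using TF that by (auto simp: bid_ok_def)
      then show ?thesis
        by (intro hB[of "q+r" "p+(r+1)"]) (use q r pq' in \<open>auto simp: le_st_def\<close>)
    qed
    show ?thesis using TF w A2 B2 E1 E2 tie by (auto simp: bid_ok_def)
  qed
qed

lemma D_step:
  assumes le: "le_st p m q m'" and q: "q \<le> TB" and lp: "l \<le> p"
  and hN: "\<forall>l\<le>q. \<exists>r\<le>TB-q. \<not> bid_ok A B q m' l r"
  and hA: "\<And>a ma b mb. b \<le> TB \<Longrightarrow> le_st a ma b mb \<Longrightarrow> A1 a ma \<Longrightarrow> A b mb"
  and hF: "\<And>a ma. le_st a ma q m' \<Longrightarrow> \<not> F a ma"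
  and hB: "\<And>a ma b mb. b \<le> TB \<Longrightarrow> le_st a ma b mb \<Longrightarrow> B1 a ma \<Longrightarrow> B b mb"
  and hX: "m' \<Longrightarrow> \<not> W0 p True"
  shows "\<exists>r\<le>TB-p. \<not> bid_ok (\<lambda>s mm. A1 s mm \<or> F s mm) (\<lambda>s mm. B1 s mm \<and> W0 s mm) p m l r"
proof -
  have pq: "p \<le> q" using le by (auto simp: le_st_def)
  have lq: "l \<le> q" using lp pq by simp
  obtain r' where r': "r' \<le> TB - q" and nb: "\<not> bid_ok A B q m' l r'" using hN[rule_format, OF lq] by blast
  have r'p: "r' \<le> TB - p" using r' pq by simp
  have FA: "A (q-l) mm" if "l > 0 \<or> \<not> mm" "A1 (p-l) mm \<or> F (p-l) mm" for mm
  proof -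
    have "le_st (p-l) mm q m'" using that(1) pq lp by (auto simp: le_st_def)
    then have "\<not> F (p-l) mm" by (rule hF)
    then have "A1 (p-l) mm" using that(2) by blast
    then show ?thesis by (rule hA[rotated 2]) (use q lp pq in \<open>auto simp: le_st_def\<close>)
  qed
  have FB: "B (q+r') mm" if "B1 (p+r') mm" for mm
    by (rule hB[OF _ _ that]) (use q r' pq in \<open>auto simp: le_st_def\<close>)
  consider (TT) "m" "m'" | (FF) "\<not>m" "\<not>m'" | (FT) "\<not>m" "m'" | (TF) "m" "\<not>m'" by blast
  then show ?thesis
  proof cases
    case TT
    have "\<not> bid_ok (\<lambda>s mm. A1 s mm \<or> F s mm) (\<lambda>s mm. B1 s mm \<and> W0 s mm) p m l r'"
    proof
      assume b: "bid_ok (\<lambda>s mm. A1 s mm \<or> F s mm) (\<lambda>s mm. B1 s mm \<and> W0 s mm) p m l r'"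
      have "bid_ok A B q m' l r'" using b TT FA FB unfolding bid_ok_def
        by (smt (verit) gr_zeroI less_nat_zero_code)
      then show False using nb by simp
    qed
    then show ?thesis using r'p by blast
  next
    case FF
    have "\<not> bid_ok (\<lambda>s mm. A1 s mm \<or> F s mm) (\<lambda>s mm. B1 s mm \<and> W0 s mm) p m l r'"
    proof
      assume b: "bid_ok (\<lambda>s mm. A1 s mm \<or> F s mm) (\<lambda>s mm. B1 s mm \<and> W0 s mm) p m l r'"
      have "bid_ok A B q m' l r'" using b FF FA FB unfolding bid_ok_def
        by (smt (verit) gr_zeroI less_nat_zero_code)
      then show False using nb by simp
    qed
    then show ?thesis using r'p by blast
  next
    case FT
    show ?thesis
    proof (cases "r' = l")
      case True
      show ?thesis
      proof (cases "l = 0")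
        case True
        then have "\<not> bid_ok (\<lambda>s mm. A1 s mm \<or> F s mm) (\<lambda>s mm. B1 s mm \<and> W0 s mm) p m l 0"
          using FT hX by (simp add: bid_ok_def)
        then show ?thesis by blast
      next
        case False
        have "\<not> A (q-l) False" using nb FT \<open>r' = l\<close> by (simp add: bid_ok_def)
        then have "\<not> bid_ok (\<lambda>s mm. A1 s mm \<or> F s mm) (\<lambda>s mm. B1 s mm \<and> W0 s mm) p m l 0"
          using FT FA False by (auto simp: bid_ok_def)
        then show ?thesis by blast
      qed
    next
      case False
      have "\<not> bid_ok (\<lambda>s mm. A1 s mm \<or> F s mm) (\<lambda>s mm. B1 s mm \<and> W0 s mm) p m l r'"
      proof
        assume b: "bid_ok (\<lambda>s mm. A1 s mm \<or> F s mm) (\<lambda>s mm. B1 s mm \<and> W0 s mm) p m l r'"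
        have "bid_ok A B q m' l r'" using b FT FA FB False unfolding bid_ok_def
          by (smt (verit) gr_zeroI less_nat_zero_code)
        then show False using nb by simp
      qed
      then show ?thesis using r'p by blast
    qed
  next
    case TF
    have pq': "p < q" using le TF by (auto simp: le_st_def)
    have FA2: "A (q-l) False" if "l > 0" "A1 (p-l) mm \<or> F (p-l) mm" for mm
    proof -
      have "le_st (p-l) mm q m'" using that(1) pq lp by (auto simp: le_st_def)
    then have "\<not> F (p-l) mm" by (rule hF)
      then have "A1 (p-l) mm" using that(2) by blast
      then show ?thesis by (rule hA[rotated 2]) (use q lp pq' in \<open>auto simp: le_st_def\<close>)
    qed
    have FB2: "\<And>mm mm'. B1 (p+r') mm \<Longrightarrow> B (q+r') mm'"
      by (rule hB[of "q+r'" "p+r'"]) (use q r' pq' in \<open>auto simp: le_st_def\<close>)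
    show ?thesis
    proof (cases "r' = l")
      case True
      have "\<not> B (q+l) True" using nb TF True by (simp add: bid_ok_def)
      moreover have "B (q+l) True" if "B1 (p+(l+1)) True"
        by (rule hB[OF _ _ that]) (use q r' pq' True in \<open>auto simp: le_st_def\<close>)
      ultimately have "\<not> bid_ok (\<lambda>s mm. A1 s mm \<or> F s mm) (\<lambda>s mm. B1 s mm \<and> W0 s mm) p m l (l+1)"
        using TF by (auto simp: bid_ok_def)
      moreover have "l + 1 \<le> TB - p" using r' True pq' q by simp
      ultimately show ?thesis by blast
    next
      case False
      have "\<not> bid_ok (\<lambda>s mm. A1 s mm \<or> F s mm) (\<lambda>s mm. B1 s mm \<and> W0 s mm) p m l r'"
      proof
        assume b: "bid_ok (\<lambda>s mm. A1 s mm \<or> F s mm) (\<lambda>s mm. B1 s mm \<and> W0 s mm) p m l r'"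
        have "bid_ok A B q m' l r'" using b TF FA2 FB2 False unfolding bid_ok_def
          by (auto split: if_splits)
        then show False using nb by simp
      qed
      then show ?thesis using r'p by blast
    qed
  qed
qed

lemma LW_plus: "LW TB (plus_g G H) q mm = ((\<exists>h. h |\<in>| lopts H \<and> winL TB (plus_g G h) q mm) \<or> (\<exists>g. g |\<in>| lopts G \<and> winL TB (plus_g g H) q mm))"
  unfolding LW_def lopts_plus by auto
lemma RW_plus: "RW TB (plus_g G H) q mm = ((\<forall>h. h |\<in>| ropts H \<longrightarrow> winL TB (plus_g G h) q mm) \<and> (\<forall>g. g |\<in>| ropts G \<longrightarrow> winL TB (plus_g g H) q mm))"
  unfolding RW_def ropts_plus by auto

lemma M_mono: "winL TB X p m \<Longrightarrow> p \<le> q \<Longrightarrow> q \<le> TB \<Longrightarrow> winL TB X q m"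
proof (induction X arbitrary: p q m)
  case (Game XL XR)
  from Game.prems(1) obtain l where lp: "l \<le> p" and hw: "\<forall>r\<le>TB-p. bid_ok (LW TB (Game XL XR)) (RW TB (Game XL XR)) p m l r"
    unfolding winL_eq[of TB "Game XL XR"] by blast
  have "\<forall>r\<le>TB-q. bid_ok (LW TB (Game XL XR)) (RW TB (Game XL XR)) q m l r"
  proof (intro allI impI)
    fix r assume r: "r \<le> TB - q"
    have w: "bid_ok (LW TB (Game XL XR)) (RW TB (Game XL XR)) p m l r" using hw r Game.prems by auto
    have A1: "LW TB (Game XL XR) (q-l) mm" if hyp: "LW TB (Game XL XR) (p-l) mm" for mm
    proof -
      obtain x where x: "x |\<in>| XL" "winL TB x (p-l) mm" using hyp by (auto simp: LW_def)
      have "winL TB x (q-l) mm" by (rule Game.IH(1)[OF x]) (use Game.prems lp in auto)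
      then show ?thesis using x by (auto simp: LW_def)
    qed
    have B1: "RW TB (Game XL XR) (q+r) mm" if "RW TB (Game XL XR) (p+r) mm" for mm
    proof -
      have "winL TB x (q+r) mm" if x: "x |\<in>| XR" for x
      proof -
        have "winL TB x (p+r) mm" using \<open>RW TB (Game XL XR) (p+r) mm\<close> x by (auto simp: RW_def)
        then show ?thesis by (rule Game.IH(2)[OF x]) (use Game.prems r in auto)
      qed
      then show ?thesis by (auto simp: RW_def)
    qed
    show "bid_ok (LW TB (Game XL XR)) (RW TB (Game XL XR)) q m l r"
      using w A1 B1 by (auto simp: bid_ok_def)
  qed
  moreover have "l \<le> q" using lp Game.prems by simp
  ultimately show ?case unfolding winL_eq[of TB "Game XL XR"] by blast
qed

lemma C_gen:
  assumes lD: "zero_g |\<in>| lopts D"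
  and rD: "\<And>y b mb p m X. y |\<in>| ropts D \<Longrightarrow> winL TB X p m \<Longrightarrow> le_st p m b mb \<Longrightarrow> b \<le> TB \<Longrightarrow> winL TB (plus_g y X) b mb"
  shows "winL TB X p m \<Longrightarrow> le_st p m q m' \<Longrightarrow> q \<le> TB \<Longrightarrow> winL TB (plus_g D X) q m'"
proof (induction X arbitrary: p m q m')
  case (Game XL XR)
  let ?X = "Game XL XR"
  have pq: "p \<le> q" using Game.prems by (auto simp: le_st_def)
  from Game.prems(1) obtain l where lp: "l \<le> p" and hw: "\<forall>r\<le>TB-p. bid_ok (LW TB ?X) (RW TB ?X) p m l r"
    unfolding winL_eq[of TB ?X] by blast
  have eqR: "RW TB (plus_g D ?X) = (\<lambda>s mm. (\<forall>h. h |\<in>| XR \<longrightarrow> winL TB (plus_g D h) s mm) \<and> (\<forall>g. g |\<in>| ropts D \<longrightarrow> winL TB (plus_g g ?X) s mm))"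
    by (intro ext) (simp add: RW_plus)
  have "\<forall>r\<le>TB-q. bid_ok (LW TB (plus_g D ?X)) (\<lambda>s mm. (\<forall>h. h |\<in>| XR \<longrightarrow> winL TB (plus_g D h) s mm) \<and> (\<forall>g. g |\<in>| ropts D \<longrightarrow> winL TB (plus_g g ?X) s mm)) q m' l r"
  proof (rule C_step[OF Game.prems(2,3) lp hw])
    show "LW TB (plus_g D ?X) b mb" if hyp: "b \<le> TB" "le_st a ma b mb" "LW TB ?X a ma" for a ma b mb
    proof -
      obtain x where x: "x |\<in>| XL" "winL TB x a ma" using hyp by (auto simp: LW_def)
      have "winL TB (plus_g D x) b mb" by (rule Game.IH(1)[OF x]) (use hyp in auto)
      then show ?thesis using x by (auto simp: LW_plus)
    qed
    show "\<forall>h. h |\<in>| XR \<longrightarrow> winL TB (plus_g D h) b mb" if "b \<le> TB" "le_st a ma b mb" "RW TB ?X a ma" for a ma b mb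
    proof (intro allI impI)
      fix x assume x: "x |\<in>| XR"
      have "winL TB x a ma" using that x by (auto simp: RW_def)
      then show "winL TB (plus_g D x) b mb" by (rule Game.IH(2)[OF x]) (use that in auto)
    qed
    show "\<forall>g. g |\<in>| ropts D \<longrightarrow> winL TB (plus_g g ?X) b mb" if "b \<le> TB" "le_st p m b mb" for b mb
      using that rD Game.prems(1) by blast
    show "LW TB (plus_g D ?X) q False" if "\<not> m"
    proof -
      have "winL TB ?X q False" using M_mono[OF Game.prems(1) pq Game.prems(3)] that by simp
      then have "winL TB (plus_g zero_g ?X) q False" unfolding plus_zero_left .
      then show ?thesis unfolding LW_plus using lD by blast
    qed
  qed
  moreover have "l \<le> q" using lp pq by simp
  ultimately show ?case unfolding winL_eq[of TB "plus_g D ?X"] eqR by blast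
qed

lemma lopts_dyad: "lopts (dyad j) = {|zero_g|}" by (cases j) (auto simp: one_g_def)
lemma ropts_dyad0: "ropts (dyad 0) = {||}" by (simp add: one_g_def)
lemma ropts_dyadS: "ropts (dyad (Suc i)) = {|dyad i|}" by simp

lemma C_main: "winL TB X p m \<Longrightarrow> le_st p m q m' \<Longrightarrow> q \<le> TB \<Longrightarrow> winL TB (plus_g (dyad j) X) q m'"
proof (induction j arbitrary: X p m q m')
  case 0
  show ?case by (rule C_gen[OF _ _ 0]) (auto simp: one_g_def)
next
  case (Suc i)
  show ?case by (rule C_gen[OF _ _ Suc.prems]) (auto simp: lopts_dyad ropts_dyadS intro: Suc.IH)
qed

lemma D_gen:
  assumes rH: "zero_g |\<in>| ropts H"
  and lH: "\<And>y a ma X b mb. y |\<in>| lopts H \<Longrightarrow> winL TB (plus_g y X) a ma \<Longrightarrow> le_st a ma b mb \<Longrightarrow> b \<le> TB \<Longrightarrow> winL TB X b mb"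
  shows "winL TB (plus_g H X) p m \<Longrightarrow> le_st p m q m' \<Longrightarrow> q \<le> TB \<Longrightarrow> winL TB X q m'"
proof (induction X arbitrary: p m q m')
  case (Game XL XR)
  let ?X = "Game XL XR"
  show ?case
  proof (rule ccontr)
    assume nw: "\<not> winL TB ?X q m'"
    have pq: "p \<le> q" using Game.prems by (auto simp: le_st_def)
    have hN: "\<forall>l\<le>q. \<exists>r\<le>TB-q. \<not> bid_ok (LW TB ?X) (RW TB ?X) q m' l r"
      using nw unfolding winL_eq[of TB ?X] by blast
    have eqL: "LW TB (plus_g H ?X) = (\<lambda>s mm. (\<exists>h. h |\<in>| XL \<and> winL TB (plus_g H h) s mm) \<or> (\<exists>g. g |\<in>| lopts H \<and> winL TB (plus_g g ?X) s mm))"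
      by (intro ext) (simp add: LW_plus)
    have eqR: "RW TB (plus_g H ?X) = (\<lambda>s mm. (\<forall>h. h |\<in>| XR \<longrightarrow> winL TB (plus_g H h) s mm) \<and> (\<forall>g. g |\<in>| ropts H \<longrightarrow> winL TB (plus_g g ?X) s mm))"
      by (intro ext) (simp add: RW_plus)
    have "\<forall>l\<le>p. \<exists>r\<le>TB-p. \<not> bid_ok (LW TB (plus_g H ?X)) (RW TB (plus_g H ?X)) p m l r"
    proof (intro allI impI)
      fix l assume lp: "l \<le> p"
      show "\<exists>r\<le>TB-p. \<not> bid_ok (LW TB (plus_g H ?X)) (RW TB (plus_g H ?X)) p m l r"
        unfolding eqL eqR
      proof (rule D_step[OF Game.prems(2,3) lp hN])
        show "LW TB ?X b mb" if hyp: "b \<le> TB" "le_st a ma b mb" "\<exists>h. h |\<in>| XL \<and> winL TB (plus_g H h) a ma" for a ma b mb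
        proof -
          obtain x where x: "x |\<in>| XL" "winL TB (plus_g H x) a ma" using hyp(3) by blast
          have "winL TB x b mb" by (rule Game.IH(1)[OF x(1) x(2) hyp(2) hyp(1)])
          then show ?thesis using x(1) by (auto simp: LW_def)
        qed
        show "\<not> (\<exists>g. g |\<in>| lopts H \<and> winL TB (plus_g g ?X) a ma)" if hyp: "le_st a ma q m'" for a ma
          using lH[OF _ _ hyp Game.prems(3)] nw by blast
        show "RW TB ?X b mb" if hyp: "b \<le> TB" "le_st a ma b mb" "\<forall>h. h |\<in>| XR \<longrightarrow> winL TB (plus_g H h) a ma" for a ma b mb
        proof -
          have "winL TB x b mb" if x: "x |\<in>| XR" for x
            using Game.IH(2)[OF x _ hyp(2) hyp(1)] hyp(3) x by blast
          then show ?thesis by (auto simp: RW_def)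
        qed
        show "\<not> (\<forall>g. g |\<in>| ropts H \<longrightarrow> winL TB (plus_g g ?X) p True)" if mt: "m'"
        proof
          assume "\<forall>g. g |\<in>| ropts H \<longrightarrow> winL TB (plus_g g ?X) p True"
          then have "winL TB (plus_g zero_g ?X) p True" using rH by blast
          then have "winL TB ?X p True" unfolding plus_zero_left .
          then have "winL TB ?X q True" using M_mono pq Game.prems(3) by blast
          then show False using nw mt by simp
        qed
      qed
    qed
    then have "\<not> winL TB (plus_g H ?X) p m" unfolding winL_eq[of TB "plus_g H ?X"] by blast
    then show False using Game.prems(1) by blast
  qed
qed

lemma lopts_cdyad0: "lopts (conj_g (dyad 0)) = {||}" by (simp add: one_g_def)
lemma lopts_cdyadS: "lopts (conj_g (dyad (Suc i))) = {|conj_g (dyad i)|}" by simp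
lemma ropts_cdyad: "ropts (conj_g (dyad j)) = {|zero_g|}" by (cases j) (auto simp: one_g_def zero_g_def)

lemma D_main: "winL TB (plus_g (conj_g (dyad j)) X) p m \<Longrightarrow> le_st p m q m' \<Longrightarrow> q \<le> TB \<Longrightarrow> winL TB X q m'"
proof (induction j arbitrary: X p m q m')
  case 0
  show ?case by (rule D_gen[OF _ _ 0]) (auto simp: lopts_cdyad0 ropts_cdyad simp del: dyad.simps conj_g.simps)
next
  case (Suc i)
  show ?case by (rule D_gen[OF _ _ Suc.prems]) (auto simp: lopts_cdyadS ropts_cdyad intro: Suc.IH simp del: dyad.simps conj_g.simps)
qed

lemma bid_ok_mono: "bid_ok A B p m l r \<Longrightarrow> (\<And>mm. A (p-l) mm \<Longrightarrow> A' (p-l) mm) \<Longrightarrow> (\<And>mm. B (p+r) mm \<Longrightarrow> B' (p+r) mm) \<Longrightarrow> bid_ok A' B' p m l r"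
  by (auto simp: bid_ok_def)

lemma mono_geq:
  assumes hL: "\<And>h. h |\<in>| lopts H \<Longrightarrow> \<exists>g. g |\<in>| lopts G \<and> geq_g TB g h"
  and hR: "\<And>g. g |\<in>| ropts G \<Longrightarrow> \<exists>h. h |\<in>| ropts H \<and> geq_g TB g h"
  shows "geq_g TB G H"
proof -
  have "winL TB (plus_g H X) p m \<Longrightarrow> p \<le> TB \<Longrightarrow> winL TB (plus_g G X) p m" for X p m
  proof (induction X arbitrary: p m)
    case (Game XL XR)
    let ?X = "Game XL XR"
    from Game.prems(1) obtain l where lp: "l \<le> p" and hw: "\<forall>r\<le>TB-p. bid_ok (LW TB (plus_g H ?X)) (RW TB (plus_g H ?X)) p m l r"
      unfolding winL_eq[of TB "plus_g H ?X"] by blast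
    have "\<forall>r\<le>TB-p. bid_ok (LW TB (plus_g G ?X)) (RW TB (plus_g G ?X)) p m l r"
    proof (intro allI impI)
      fix r assume r: "r \<le> TB - p"
      show "bid_ok (LW TB (plus_g G ?X)) (RW TB (plus_g G ?X)) p m l r"
      proof (rule bid_ok_mono)
        show "bid_ok (LW TB (plus_g H ?X)) (RW TB (plus_g H ?X)) p m l r" using hw r by blast
        show "LW TB (plus_g G ?X) (p-l) mm" if hyp: "LW TB (plus_g H ?X) (p-l) mm" for mm
        proof -
          have b: "p - l \<le> TB" using Game.prems by simp
          from hyp consider (a) h where "h |\<in>| XL" "winL TB (plus_g H h) (p-l) mm"
            | (b) h where "h |\<in>| lopts H" "winL TB (plus_g h ?X) (p-l) mm"
            unfolding LW_plus by auto
          then show ?thesis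
          proof cases
            case a
            then have "winL TB (plus_g G h) (p-l) mm" using Game.IH(1) b by blast
            then show ?thesis using a unfolding LW_plus by auto
          next
            case b
            obtain g where g: "g |\<in>| lopts G" "geq_g TB g h" using hL[OF b(1)] by blast
            then have "winL TB (plus_g g ?X) (p-l) mm" using b \<open>p - l \<le> TB\<close> unfolding geq_g_def outcome_def by blast
            then show ?thesis using g unfolding LW_plus by auto
          qed
        qed
        show "RW TB (plus_g G ?X) (p+r) mm" if hyp: "RW TB (plus_g H ?X) (p+r) mm" for mm
        proof -
          have b: "p + r \<le> TB" using Game.prems r by simp
          have 1: "winL TB (plus_g G x) (p+r) mm" if x: "x |\<in>| XR" for x
          proof -
            have "winL TB (plus_g H x) (p+r) mm" using hyp x unfolding RW_plus by simp
            then show ?thesis using Game.IH(2)[OF x _ b] by blast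
          qed
          have 2: "winL TB (plus_g g ?X) (p+r) mm" if g: "g |\<in>| ropts G" for g
          proof -
            obtain h where h: "h |\<in>| ropts H" "geq_g TB g h" using hR[OF g] by blast
            have "winL TB (plus_g h ?X) (p+r) mm" using hyp h(1) unfolding RW_plus by blast
            then show ?thesis using h(2) b unfolding geq_g_def outcome_def by blast
          qed
          show ?thesis unfolding RW_plus using 1 2 by simp
        qed
      qed
    qed
    then show ?case unfolding winL_eq[of TB "plus_g G ?X"] using lp by blast
  qed
  then show ?thesis unfolding geq_g_def outcome_def by blast
qed

lemma geq_refl: "geq_g TB G G" by (simp add: geq_g_def)

lemma win_zero_F: "winL TB zero_g p False"
  unfolding winL_eq[of TB zero_g] by (rule exI[of _ 0]) (auto simp: bid_ok_def LW_def RW_def zero_g_def)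
lemma lose_zero_T: "\<not> winL TB zero_g p True"
  unfolding winL_eq[of TB zero_g] by (auto simp: bid_ok_def LW_def RW_def zero_g_def intro!: exI[of _ 0])

lemma win_star_TB: "winL TB star_g TB True"
  unfolding winL_eq[of TB star_g] by (rule exI[of _ 0]) (auto simp: bid_ok_def LW_def RW_def star_g_def win_zero_F)
lemma lose_star_0: "\<not> winL TB star_g 0 False"
  unfolding winL_eq[of TB star_g] by (auto simp: bid_ok_def LW_def RW_def star_g_def lose_zero_T intro!: exI[of _ 0])

lemma win_dyad: "winL TB (dyad j) p m"
proof (induction j arbitrary: p m)
  case 0
  show ?case unfolding winL_eq[of TB "dyad 0"]
    by (rule exI[of _ 0]) (auto simp: bid_ok_def LW_def RW_def one_g_def win_zero_F)
next
  case (Suc i)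
  show ?case unfolding winL_eq[of TB "dyad (Suc i)"]
    by (rule exI[of _ 0]) (auto simp: bid_ok_def LW_def RW_def win_zero_F Suc.IH lopts_dyad ropts_dyadS simp del: dyad.simps)
qed

lemma lose_cdyad: "\<not> winL TB (conj_g (dyad j)) p m"
proof (induction j arbitrary: p m)
  case 0
  show ?case unfolding winL_eq[of TB "conj_g (dyad 0)"]
    by (auto simp: bid_ok_def LW_def RW_def lopts_cdyad0 ropts_cdyad lose_zero_T simp del: dyad.simps conj_g.simps intro!: exI[of _ 0])
next
  case (Suc i)
  show ?case unfolding winL_eq[of TB "conj_g (dyad (Suc i))"]
    by (auto simp: bid_ok_def LW_def RW_def lopts_cdyadS ropts_cdyad lose_zero_T Suc.IH simp del: dyad.simps conj_g.simps intro!: exI[of _ 0])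
qed

lemma le_st_refl: "le_st p m p m" by (simp add: le_st_def)

theorem mainTheorem20:
  fixes TB :: nat and k :: nat
  assumes "k \<ge> 1"
  shows "gt_g TB star_g (conj_g (dyad k)) \<and> gt_g TB (dyad k) star_g"
proof -
  obtain i where k: "k = Suc i" using assms by (cases k) auto
  have g0H: "geq_g TB zero_g (conj_g (dyad j))" for j
    unfolding geq_g_def outcome_def plus_zero_left using D_main le_st_refl by blast
  have gD0: "geq_g TB (dyad j) zero_g" for j
    unfolding geq_g_def outcome_def plus_zero_left using C_main le_st_refl by blast
  have 1: "geq_g TB star_g (conj_g (dyad k))"
  proof (rule mono_geq)
    show "\<exists>g. g |\<in>| lopts star_g \<and> geq_g TB g h" if "h |\<in>| lopts (conj_g (dyad k))" for h
      using that g0H by (auto simp: k lopts_cdyadS star_g_def simp del: dyad.simps conj_g.simps)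
    show "\<exists>h. h |\<in>| ropts (conj_g (dyad k)) \<and> geq_g TB g h" if "g |\<in>| ropts star_g" for g
      using that geq_refl by (auto simp: ropts_cdyad star_g_def simp del: dyad.simps conj_g.simps)
  qed
  have 2: "\<not> geq_g TB (conj_g (dyad k)) star_g"
  proof
    assume "geq_g TB (conj_g (dyad k)) star_g"
    then have "winL TB (plus_g star_g zero_g) TB True \<longrightarrow> winL TB (plus_g (conj_g (dyad k)) zero_g) TB True"
      unfolding geq_g_def outcome_def by blast
    then show False using win_star_TB lose_cdyad unfolding plus_zero_right by blast
  qed
  have 3: "geq_g TB (dyad k) star_g"
  proof (rule mono_geq)
    show "\<exists>g. g |\<in>| lopts (dyad k) \<and> geq_g TB g h" if "h |\<in>| lopts star_g" for h
      using that geq_refl by (auto simp: lopts_dyad star_g_def simp del: dyad.simps)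
    show "\<exists>h. h |\<in>| ropts star_g \<and> geq_g TB g h" if "g |\<in>| ropts (dyad k)" for g
      using that gD0 by (auto simp: k ropts_dyadS star_g_def simp del: dyad.simps)
  qed
  have 4: "\<not> geq_g TB star_g (dyad k)"
  proof
    assume "geq_g TB star_g (dyad k)"
    then have "winL TB (plus_g (dyad k) zero_g) 0 False \<longrightarrow> winL TB (plus_g star_g zero_g) 0 False"
      unfolding geq_g_def outcome_def by blast
    then show False using win_dyad lose_star_0 unfolding plus_zero_right by blast
  qed
  show ?thesis using 1 2 3 4 unfolding gt_g_def by blast
qed

end
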